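(* Let $q\ge4$ be even, let $\alpha,\beta\in\mathbb{F}_{q^2}$ with $\alpha\neq0$, $\beta\notin\mathbb{F}_q$ and $\alpha^{q+1}/(\beta^q+\beta)^2$ of absolute trace $0$, let $R=(0,\delta,1)$ and $U_\infty=(1,0,0)$. If $\ell$ is a line of $\mathrm{PG}(2,q^2)$ through $U_\infty$, then $\ell$ meets $\mathrm{pedal}(R)$ in at most two points.
   Context: Points of $\mathrm{PG}(2,q^2)$ have homogeneous coordinates $(x,y,z)$. $\delta\in\mathbb{F}_{q^2}\setminus\mathbb{F}_q$ satisfies $\delta^q=1+\delta$ and $\delta^2=v+\delta$ with $v\in\mathbb{F}_q$, $v\ne1$, of absolute trace $1$. $\mathcal U_{\alpha\beta}=\{(x,\alpha x^2+\beta x^{q+1}+r,1): x\in\mathbb{F}_{q^2}, r\in\mathbb{F}_q\}\cup\{(0,1,0)\}$, which under the hypotheses is a unital (a set of $q^3+1$ points meeting every line in $1$ or $q+1$ points), and $R\notin\mathcal U_{\alpha\beta}$. For a point $P$ not on the unital, $\mathrm{pedal}(P)$ is the set of points of contact of the $q+1$ tangent lines (lines meeting the unital in exactly one point) through $P$. *)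

theory Defs
  imports Main
begin

type_synonym 'a vec3 = "'a \<times> 'a \<times> 'a"

definition smul3 :: "'a::field \<Rightarrow> 'a vec3 \<Rightarrow> 'a vec3" where
  "smul3 c v = (case v of (x, y, z) \<Rightarrow> (c * x, c * y, c * z))"

definition ppt :: "'a::field vec3 \<Rightarrow> 'a vec3 set" where
  "ppt v = {smul3 c v | c. c \<noteq> 0}"

definition ppoints :: "'a::field vec3 set set" where
  "ppoints = {ppt v | v. v \<noteq> (0, 0, 0)}"

definition incid3 :: "'a::field vec3 \<Rightarrow> 'a vec3 \<Rightarrow> bool" where
  "incid3 L v = (case L of (a, b, c) \<Rightarrow> case v of (x, y, z) \<Rightarrow> a * x + b * y + c * z = 0)"

definition pline :: "'a::field vec3 \<Rightarrow> 'a vec3 set set" where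
  "pline L = {ppt v | v. v \<noteq> (0, 0, 0) \<and> incid3 L v}"

definition plines :: "'a::field vec3 set set set" where
  "plines = {pline L | L. L \<noteq> (0, 0, 0)}"

text \<open>The set U_{alpha beta}; F_q is the subfield {r. r^q = r}.\<close>
definition unitalAB :: "nat \<Rightarrow> 'a::field \<Rightarrow> 'a \<Rightarrow> 'a vec3 set set" where
  "unitalAB q \<alpha> \<beta> =
     {ppt (x, \<alpha> * x ^ 2 + \<beta> * x ^ (q + 1) + r, 1) | x r. r ^ q = r} \<union> {ppt (0, 1, 0)}"

definition tangent_line :: "'a::field vec3 set set \<Rightarrow> 'a vec3 set set \<Rightarrow> bool" where
  "tangent_line U l = (l \<in> plines \<and> card (l \<inter> U) = 1)"

definition pedal :: "'a::field vec3 set set \<Rightarrow> 'a vec3 set \<Rightarrow> 'a vec3 set set" where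
  "pedal U P = {Q. \<exists>l. tangent_line U l \<and> P \<in> l \<and> l \<inter> U = {Q}}"

definition abs_trace :: "nat \<Rightarrow> 'a::field \<Rightarrow> 'a" where
  "abs_trace h x = (\<Sum>i<h. x ^ (2 ^ i))"

end

theory Submission
  imports Defs
begin


lemma char2_field:
  assumes "card (UNIV :: 'a::{field,finite} set) = 2 ^ k" and "k > 0"
  shows "(2::'a) = 0"
proof -
  have b: "bij (\<lambda>x::'a. x + 1)"
    by (rule bij_betw_byWitness[where f'="\<lambda>x. x - 1"]) auto
  have "(\<Sum>x\<in>UNIV. x) = (\<Sum>x\<in>UNIV. (x::'a) + 1)"
    using sum.reindex[of "\<lambda>x::'a. x + 1" UNIV id] b by (simp add: bij_def)
  also have "\<dots> = (\<Sum>x\<in>UNIV. x) + of_nat (card (UNIV::'a set))"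
    by (simp add: sum.distrib)
  finally have "of_nat (card (UNIV::'a set)) = (0::'a)" by simp
  hence "(2::'a) ^ k = 0" using assms(1) by simp
  thus ?thesis by simp
qed

lemma frob_add:
  assumes "(2::'a::field) = 0"
  shows "((x::'a) + y) ^ (2 ^ k) = x ^ (2 ^ k) + y ^ (2 ^ k)"
proof (induction k)
  case 0 then show ?case by simp
next
  case (Suc k)
  have "(x + y) ^ (2 ^ Suc k) = ((x + y) ^ (2 ^ k)) ^ 2"
    by (simp add: power_mult[symmetric] mult.commute)
  also have "\<dots> = (x ^ (2 ^ k) + y ^ (2 ^ k)) ^ 2" using Suc by simp
  also have "\<dots> = (x ^ (2 ^ k)) ^ 2 + (y ^ (2 ^ k)) ^ 2 + 2 * x ^ (2 ^ k) * y ^ (2 ^ k)"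
    by (simp add: power2_eq_square algebra_simps)
  also have "\<dots> = x ^ (2 ^ Suc k) + y ^ (2 ^ Suc k)"
    using assms by (simp add: power_mult[symmetric] mult.commute)
  finally show ?case .
qed

lemma fermat_field:
  fixes x :: "'a::{field,finite}"
  shows "x ^ card (UNIV :: 'a set) = x"
proof (cases "x = 0")
  case True
  have "card (UNIV :: 'a set) > 0" by (simp add: finite_UNIV_card_ge_0)
  then show ?thesis using True by (simp add: power_0_left)
next
  case False
  let ?S = "UNIV - {0::'a}"
  have b: "bij_betw (\<lambda>y. x * y) ?S ?S"
    by (rule bij_betw_byWitness[where f'="\<lambda>y. y / x"]) (use False in auto)
  have nz: "prod id ?S \<noteq> 0" by (simp add: prod_zero_iff)
  have "prod id ?S = prod ((\<lambda>y. x * y)) ?S"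
    using prod.reindex_bij_betw[OF b, of id] by simp
  also have "\<dots> = x ^ card ?S * prod id ?S"
    by (simp add: prod.distrib)
  finally have eq: "prod id ?S = x ^ card ?S * prod id ?S" .
  have x1: "x ^ card ?S = 1"
  proof -
    have "1 * prod id ?S = x ^ card ?S * prod id ?S" using eq by simp
    thus ?thesis using nz by (simp only: mult_cancel_right) simp
  qed
  have "card (UNIV :: 'a set) = Suc (card ?S)"
    by (simp add: card_Diff_singleton_if card_Suc_Diff1 finite_UNIV_card_ge_0)
  hence "x ^ card (UNIV :: 'a set) = x * x ^ card ?S" by (simp only: power_Suc)
  thus ?thesis using x1 by (simp only: mult_1_right)
qed



lemma ppt_self: "v \<in> ppt v"
proof -
  have "smul3 1 v = v" by (cases v) (simp add: smul3_def)
  thus ?thesis unfolding ppt_def mem_Collect_eq by (intro exI[of _ 1]) simp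
qed

lemma ppt_eqD: "ppt v = ppt w \<Longrightarrow> \<exists>c. c \<noteq> 0 \<and> v = smul3 c w"
  using ppt_self[of v] unfolding ppt_def by auto

lemma ppt_eq1: "ppt (x, y, 1) = ppt (x', y', (1::'a::field)) \<Longrightarrow> x = x' \<and> y = y'"
  by (drule ppt_eqD) (auto simp: smul3_def)

lemma ppt_ne_inf: "ppt (x, y, 1) \<noteq> ppt (0, 1, (0::'a::field))"
  by (rule notI, drule ppt_eqD) (auto simp: smul3_def)

lemma incid_smul: assumes "(c::'a::field) \<noteq> 0" shows "incid3 L (smul3 c w) = incid3 L w"
proof -
  obtain a b d where L: "L = (a,b,d)" by (cases L)
  obtain x y z where w: "w = (x,y,z)" by (cases w)
  have "a * (c * x) + b * (c * y) + d * (c * z) = c * (a * x + b * y + d * z)"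
    by (simp add: algebra_simps)
  thus ?thesis using assms by (simp add: L w incid3_def smul3_def)
qed

lemma mem_pline: assumes "v \<noteq> (0,0,0)" shows "(ppt v \<in> pline L) = incid3 L (v::'a::field vec3)"
proof
  assume "ppt v \<in> pline L"
  then obtain w where w: "ppt v = ppt w" "incid3 L w" unfolding pline_def by blast
  then obtain c where c: "c \<noteq> 0" "v = smul3 c w" using ppt_eqD by blast
  thus "incid3 L v" using w incid_smul[OF c(1)] by simp
next
  assume "incid3 L v"
  thus "ppt v \<in> pline L" using assms unfolding pline_def by blast
qed

lemma plinesE: "l \<in> plines \<Longrightarrow> \<exists>a b c. (a,b,c) \<noteq> (0,0,0) \<and> l = pline (a,b,c)"
  unfolding plines_def by auto



lemma char2_self: "(2::'a::field) = 0 \<Longrightarrow> (x::'a) + x = 0"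
  by (metis mult_2 mult_zero_left)

lemma char2_neg: "(2::'a::field) = 0 \<Longrightarrow> - (x::'a) = x"
  using char2_self[of x] by (simp add: add_eq_0_iff2 eq_neg_iff_add_eq_0)

lemma sq_add: "(2::'a::field) = 0 \<Longrightarrow> ((x::'a) + y) ^ 2 = x ^ 2 + y ^ 2"
  using frob_add[of x y 1] by simp

lemma core_exists:
  fixes \<delta> v b \<alpha> M :: "'a::field"
  assumes two: "(2::'a) = 0"
    and fa: "\<And>x y::'a. (x+y)^q = x^q + y^q"
    and ff: "\<And>x::'a. (x^q)^q = x"
    and q0: "q > 0"
    and d1: "\<delta>^q = 1 + \<delta>" and vq: "v^q = v" and v0: "v \<noteq> 0" and v1: "v \<noteq> 1"
    and bq: "b^q = b" and b0: "b \<noteq> 0" and M0: "M \<noteq> 0"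
  shows "\<exists>z. z \<noteq> 0 \<and> \<alpha>*z^2 + \<alpha>^q*(z^q)^2 + b*z*z^q + M*z + M^q*z^q = 0"
proof -
  define Qf where "Qf z = \<alpha>*z^2 + \<alpha>^q*(z^q)^2 + b*z*z^q" for z
  have sqq: "(z^2)^q = (z^q)^2" for z :: 'a
    by (simp add: power_mult[symmetric] mult.commute)
  have Qfq: "(Qf z)^q = Qf z" for z
    unfolding Qf_def by (simp add: fa power_mult_distrib ff sqq bq algebra_simps)
  define M' where "M' = M^q"
  have M'0: "M' \<noteq> 0" using M0 q0 by (simp add: M'_def)
  define G where "G c = \<alpha>*(\<delta>^2+c^2)*M'^2 + \<alpha>^q*(1+\<delta>^2+c^2)*M^2 + b*(\<delta>+\<delta>^2+c+c^2)*M*M'" for c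
  have GQ: "Qf ((\<delta>+c)/M) * (M^2*M'^2) = G c" if cq: "c^q = c" for c
  proof -
    have zq: "((\<delta>+c)/M)^q = (1+\<delta>+c)/M'"
      by (simp add: power_divide fa d1 cq M'_def)
    have e1: "(\<delta>+c)^2 = \<delta>^2+c^2" "(1+\<delta>+c)^2 = 1+\<delta>^2+c^2"
      using sq_add[OF two] by simp_all
    have e2: "(\<delta>+c)*(1+\<delta>+c) = \<delta>+\<delta>^2+c+c^2"
    proof -
      have "(\<delta>+c)*(1+\<delta>+c) = \<delta>+\<delta>^2+c+c^2 + 2*\<delta>*c"
        by (simp add: algebra_simps power2_eq_square)
      thus ?thesis using two by simp
    qed
    have "Qf ((\<delta>+c)/M) * (M^2*M'^2) = \<alpha>*(\<delta>+c)^2*M'^2 + \<alpha>^q*(1+\<delta>+c)^2*M^2 + b*((\<delta>+c)*(1+\<delta>+c))*M*M'"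
      unfolding Qf_def zq using M0 M'0
      by (simp add: field_simps power2_eq_square)
    thus ?thesis unfolding G_def e1 e2 .
  qed
  have "\<exists>c. c^q = c \<and> Qf ((\<delta>+c)/M) \<noteq> 0"
  proof (rule ccontr)
    assume "\<not> ?thesis"
    hence H: "c^q = c \<Longrightarrow> G c = 0" for c using GQ by fastforce
    have G0: "G 0 = 0" using H q0 by simp
    have G1: "G 1 = 0" using H by simp
    have Gv: "G v = 0" using H vq by simp
    have "G 1 - G 0 = \<alpha>*M'^2 + \<alpha>^q*M^2 + 2*(b*M*M')"
      unfolding G_def by (simp add: algebra_simps)
    hence A0: "\<alpha>*M'^2 + \<alpha>^q*M^2 = 0" using G0 G1 two by simp
    have "G v - G 0 = v^2*(\<alpha>*M'^2 + \<alpha>^q*M^2) + b*(v*(1+v))*M*M'"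
      unfolding G_def by (simp add: algebra_simps power2_eq_square)
    hence "b*(v*(1+v))*M*M' = 0" using G0 Gv A0 by simp
    moreover have "1 + v \<noteq> 0"
    proof
      assume "1 + v = 0"
      hence "v = - 1" by (simp add: eq_neg_iff_add_eq_0 add.commute)
      thus False using v1 char2_neg[OF two, of 1] by simp
    qed
    ultimately show False using b0 v0 M0 M'0 by simp
  qed
  then obtain c where cq: "c^q = c" and Qn: "Qf ((\<delta>+c)/M) \<noteq> 0" by blast
  define z1 where "z1 = (\<delta>+c)/M"
  define t where "t = 1 / Qf z1"
  have tq: "t^q = t" unfolding t_def by (simp add: power_divide Qfq)
  have z1n: "z1 \<noteq> 0" using Qn q0 unfolding z1_def Qf_def by (auto simp: power_0_left)
  have t0: "t \<noteq> 0" using Qn unfolding t_def z1_def by simp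
  have Mz: "M * z1 = \<delta> + c" unfolding z1_def using M0 by simp
  have Mzq: "M^q * z1^q = 1 + \<delta> + c"
    using arg_cong[OF Mz, of "\<lambda>x. x^q"] by (simp add: power_mult_distrib fa d1 cq)
  have "\<alpha>*(t*z1)^2 + \<alpha>^q*((t*z1)^q)^2 + b*(t*z1)*(t*z1)^q + M*(t*z1) + M^q*(t*z1)^q
      = t^2 * Qf z1 + t * (M*z1 + M^q*z1^q)"
    unfolding Qf_def by (simp add: power_mult_distrib tq algebra_simps power2_eq_square)
  also have "\<dots> = t + t * ((\<delta> + c) + (1 + \<delta> + c))"
  proof -
    have "t^2 * Qf z1 = t" using Qn unfolding t_def z1_def[symmetric] by (simp add: power2_eq_square)
    thus ?thesis by (simp only: Mz Mzq)
  qed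
  also have "\<dots> = t + t * (1 + 2*(\<delta>+c))" by (simp add: algebra_simps)
  also have "\<dots> = 0" using two char2_self[OF two, of t] by simp
  finally show ?thesis using t0 z1n by (intro exI[of _ "t*z1"]) simp
qed



lemma sq_inj: "(2::'a::field) = 0 \<Longrightarrow> (x::'a)^2 = y^2 \<Longrightarrow> x = y"
proof -
  assume two: "(2::'a) = 0" and e: "x^2 = y^2"
  have "(x + y)^2 = 0" using sq_add[OF two, of x y] e char2_self[OF two, of "y^2"] by simp
  hence "x + y = 0" by simp
  hence "x = - y" by (simp add: eq_neg_iff_add_eq_0)
  thus "x = y" using char2_neg[OF two] by simp
qed

lemma quad_two:
  fixes \<alpha> k d u1 u2 :: "'a::field"
  assumes "\<alpha>*u1^2 - k*u1 + d = 0" "\<alpha>*u2^2 - k*u2 + d = 0" "u1 \<noteq> u2"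
  shows "\<alpha>*(u1+u2) = k"
proof -
  have "(u1 - u2) * (\<alpha>*(u1+u2) - k) = (\<alpha>*u1^2 - k*u1 + d) - (\<alpha>*u2^2 - k*u2 + d)"
    by (simp add: algebra_simps power2_eq_square)
  also have "\<dots> = 0" using assms by simp
  finally show ?thesis using assms(3) by simp
qed

lemma card_le2I:
  assumes "finite S" and "\<And>x y z. x \<in> S \<Longrightarrow> y \<in> S \<Longrightarrow> z \<in> S \<Longrightarrow> x \<noteq> y \<Longrightarrow> y \<noteq> z \<Longrightarrow> x \<noteq> z \<Longrightarrow> False"
  shows "card S \<le> 2"
proof (rule ccontr)
  assume "\<not> card S \<le> 2"
  hence "3 \<le> card S" by simp
  then obtain T where "T \<subseteq> S" "card T = 3" using obtain_subset_with_card_n by metis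
  then obtain x y z where "T = {x,y,z}" "x \<noteq> y" "y \<noteq> z" "x \<noteq> z" using card_3_iff by metis
  thus False using assms(2) \<open>T \<subseteq> S\<close> by auto
qed

lemma no_three:
  fixes \<alpha> b e f \<delta> :: "'a::{field,finite}"
  assumes two: "(2::'a) = 0"
    and fa: "\<And>x y::'a. (x+y)^q = x^q + y^q"
    and a0: "\<alpha> \<noteq> 0" and b0: "b \<noteq> 0" and e0: "e \<noteq> 0"
  shows "card {x. \<alpha>*x^2 + \<alpha>^q*(x^q)^2 + b*x*x^q = 1 \<and> e*(b*x*x^q + \<delta>) + f = 0} \<le> 2"
    (is "card ?S \<le> 2")
proof (rule card_le2I)
  show "finite ?S" by simp
  define n where "n = (- (f/e) - \<delta>)/b"
  define k where "k = 1 - b*n"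
  have sqq: "(z^2)^q = (z^q)^2" for z :: 'a
    by (simp add: power_mult[symmetric] mult.commute)
  have P: "\<alpha>*(x^2)^2 - k*(x^2) + \<alpha>^q*n^2 = 0" if "x \<in> ?S" for x
  proof -
    from that have h1: "\<alpha>*x^2 + \<alpha>^q*(x^q)^2 + b*x*x^q = 1" and h2: "e*(b*x*x^q + \<delta>) + f = 0" by auto
    have "e*(b*x*x^q + \<delta>) = - f" using h2 by (simp add: eq_neg_iff_add_eq_0)
    hence "b*x*x^q + \<delta> = - f / e" using e0 by (simp add: field_simps)
    hence N: "x*x^q = n" using b0 unfolding n_def by (simp add: field_simps)
    have h3: "\<alpha>^q*(x^q)^2 = k - \<alpha>*x^2" using h1 N unfolding k_def by (simp add: algebra_simps)
    have "\<alpha>*(x^2)^2 - k*(x^2) + \<alpha>^q*n^2 = \<alpha>*(x^2)^2 - k*(x^2) + \<alpha>^q*(x^q)^2 * x^2"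
      using N by (simp add: power2_eq_square algebra_simps flip: N)
    also have "\<dots> = 0" unfolding h3 by (simp add: algebra_simps power2_eq_square)
    finally show ?thesis .
  qed
  fix x y z assume xyz: "x \<in> ?S" "y \<in> ?S" "z \<in> ?S" "x \<noteq> y" "y \<noteq> z" "x \<noteq> z"
  have d: "x^2 \<noteq> y^2" "x^2 \<noteq> z^2" using xyz sq_inj[OF two] by blast+
  have "\<alpha>*(x^2+y^2) = k" by (rule quad_two[OF P[OF xyz(1)] P[OF xyz(2)] d(1)])
  moreover have "\<alpha>*(x^2+z^2) = k" by (rule quad_two[OF P[OF xyz(1)] P[OF xyz(3)] d(2)])
  ultimately have "\<alpha>*(x^2+y^2) = \<alpha>*(x^2+z^2)" by simp
  hence "x^2+y^2 = x^2+z^2" using a0 by (simp only: mult_cancel_left) simp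
  hence "y^2 = z^2" by (simp only: add_left_cancel)
  thus False using sq_inj[OF two] xyz by blast
qed



lemma pedal_char:
  fixes \<alpha> \<beta> \<delta> v b :: "'a::{field,finite}"
  assumes two: "(2::'a) = 0"
    and fa: "\<And>x y::'a. (x+y)^q = x^q + y^q"
    and ff: "\<And>x::'a. (x^q)^q = x"
    and q0: "q > 0"
    and d1: "\<delta>^q = 1 + \<delta>" and vq: "v^q = v" and v0: "v \<noteq> 0" and v1: "v \<noteq> 1"
    and bdef: "b = \<beta> + \<beta>^q" and b0: "b \<noteq> 0"
    and Q: "Q \<in> pedal (unitalAB q \<alpha> \<beta>) (ppt (0,\<delta>,1))"
  shows "\<exists>x0. Q = ppt (x0, b*x0*x0^q + \<delta>, 1) \<and> \<alpha>*x0^2 + \<alpha>^q*(x0^q)^2 + b*x0*x0^q = 1"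
proof -
  define U where "U = unitalAB q \<alpha> \<beta>"
  have bq: "b^q = b" unfolding bdef by (simp add: fa ff add.commute)
  have sqq: "(z^2)^q = (z^q)^2" for z :: 'a
    by (simp add: power_mult[symmetric] mult.commute)
  have pw: "x^(q+1) = x * x^q" for x :: 'a by simp
  have U_mem: "ppt (x, \<alpha>*x^2 + \<beta>*(x*x^q) + r, 1) \<in> U" if "r^q = r" for x r
    unfolding U_def unitalAB_def pw using that by blast
  have U_cases: "P = ppt(0,1,0) \<or> (\<exists>x r. r^q = r \<and> P = ppt(x, \<alpha>*x^2 + \<beta>*(x*x^q) + r, 1))"
    if "P \<in> U" for P
    using that unfolding U_def unitalAB_def pw by blast
  have Pinf: "ppt(0,1,0) \<in> U" unfolding U_def unitalAB_def by simp
  have P0: "ppt(0,0,1) \<in> U" using U_mem[of 0 0] q0 by (simp add: power_0_left)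
  from Q obtain l' where tl: "tangent_line U l'" "ppt(0,\<delta>,1) \<in> l'" "l' \<inter> U = {Q}"
    unfolding pedal_def U_def by blast
  from tl(1) have "l' \<in> plines" unfolding tangent_line_def by simp
  then obtain a1 b1 c1 where l': "l' = pline (a1,b1,c1)" using plinesE by blast
  have inc: "ppt(x,y,z) \<in> l' \<longleftrightarrow> a1*x + b1*y + c1*z = 0" if "(x,y,z) \<noteq> (0,0,0)" for x y z
    using mem_pline[OF that] unfolding l' incid3_def by simp
  have Rinc: "b1*\<delta> + c1 = 0" using tl(2) inc[of 0 \<delta> 1] by simp
  have QU: "Q \<in> U" "Q \<in> l'" using tl(3) by auto
  have inU: "P = Q" if "P \<in> l'" "P \<in> U" for P using tl(3) that by auto
  have b1: "b1 \<noteq> 0"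
  proof
    assume "b1 = 0"
    hence "c1 = 0" using Rinc by simp
    hence "ppt(0,0,1) \<in> l'" "ppt(0,1,0) \<in> l'" using \<open>b1=0\<close> inc[of 0 0 1] inc[of 0 1 0] by simp_all
    hence "ppt(0,0,1) = Q" "ppt(0,1,0) = Q" using inU P0 Pinf by auto
    thus False using ppt_ne_inf[of 0 0] by metis
  qed
  have "Q \<noteq> ppt(0,1,0)"
  proof
    assume "Q = ppt(0,1,0)"
    hence "ppt(0,1,0) \<in> l'" using QU by simp
    hence "b1 = 0" using inc[of 0 1 0] by simp
    thus False using b1 by simp
  qed
  then obtain x0 r0 where r0q: "r0^q = r0" and Qe: "Q = ppt(x0, \<alpha>*x0^2 + \<beta>*(x0*x0^q) + r0, 1)"
    using U_cases[OF QU(1)] by blast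
  define m where "m = - a1 / b1"
  have lin: "ppt(x,y,1) \<in> l' \<longleftrightarrow> y = m*x + \<delta>" for x y
  proof -
    have c1: "c1 = - b1*\<delta>" using Rinc by (simp add: eq_neg_iff_add_eq_0 add.commute)
    have "ppt(x,y,1) \<in> l' \<longleftrightarrow> a1*x + b1*y + c1 = 0" using inc[of x y 1] by simp
    also have "a1*x + b1*y + c1 = b1*(y - (m*x + \<delta>))" using b1 unfolding m_def c1
      by (simp add: field_simps)
    finally show ?thesis using b1 by simp
  qed
  define y0 where "y0 = \<alpha>*x0^2 + \<beta>*(x0*x0^q) + r0"
  have y0: "y0 = m*x0 + \<delta>" using lin QU(2) Qe y0_def by simp
  define P where "P x = m*x + \<delta> + \<alpha>*x^2 + \<beta>*(x*x^q)" for x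
  have uniq: "x = x0" if h: "(P x)^q = P x" for x
  proof -
    have e: "\<alpha>*x^2 + \<beta>*(x*x^q) + P x = m*x + \<delta>"
    proof -
      have "\<alpha>*x^2 + \<beta>*(x*x^q) + P x = m*x + \<delta> + 2*(\<alpha>*x^2 + \<beta>*(x*x^q))"
        unfolding P_def by (simp add: algebra_simps)
      thus ?thesis using two by simp
    qed
    have "ppt(x, \<alpha>*x^2 + \<beta>*(x*x^q) + P x, 1) \<in> U" using U_mem h by blast
    moreover have "ppt(x, \<alpha>*x^2 + \<beta>*(x*x^q) + P x, 1) \<in> l'" using lin e by simp
    ultimately have "ppt(x, \<alpha>*x^2 + \<beta>*(x*x^q) + P x, 1) = Q" using inU by blast
    thus ?thesis using Qe ppt_eq1 by metis
  qed
  have Px0: "P x0 = r0"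
  proof -
    have "P x0 = y0 + (\<alpha>*x0^2 + \<beta>*(x0*x0^q))" unfolding P_def y0 by (simp add: algebra_simps)
    also have "\<dots> = r0 + 2*(\<alpha>*x0^2 + \<beta>*(x0*x0^q))" unfolding y0_def by (simp add: algebra_simps)
    finally show ?thesis using two by simp
  qed
  define M where "M = m + b*x0^q"
  have M0: "M = 0"
  proof (rule ccontr)
    assume "M \<noteq> 0"
    from core_exists[OF two fa ff q0 d1 vq v0 v1 bq b0 this, of \<alpha>] obtain z where
      z: "z \<noteq> 0" "\<alpha>*z^2 + \<alpha>^q*(z^q)^2 + b*z*z^q + M*z + M^q*z^q = 0" by blast
    have Mq: "M^q = m^q + b*x0" unfolding M_def by (simp add: fa power_mult_distrib bq ff)
    have iden: "P (x0+z) + (P (x0+z))^q = (P x0 + (P x0)^q) + (\<alpha>*z^2 + \<alpha>^q*(z^q)^2 + b*z*z^q + M*z + M^q*z^q)"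
      unfolding P_def Mq unfolding M_def bdef
      by (simp add: fa power_mult_distrib ff sq_add[OF two] sqq algebra_simps)
    have "P x0 + (P x0)^q = 0" using Px0 r0q char2_self[OF two] by simp
    hence "P (x0+z) + (P (x0+z))^q = 0" using iden z(2) by simp
    hence "(P (x0+z))^q = - P (x0+z)" by (simp add: eq_neg_iff_add_eq_0 add.commute)
    hence "(P (x0+z))^q = P (x0+z)" using char2_neg[OF two] by simp
    hence "x0 + z = x0" by (rule uniq)
    thus False using z(1) by simp
  qed
  hence m: "m = b*x0^q"
  proof -
    have "m = - (b*x0^q)" using M0 unfolding M_def by (simp add: eq_neg_iff_add_eq_0)
    thus ?thesis using char2_neg[OF two] by simp
  qed
  show ?thesis
  proof (intro exI conjI)
    show "Q = ppt(x0, b*x0*x0^q + \<delta>, 1)" using Qe y0 m y0_def by (simp add: algebra_simps)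
    have "(P x0)^q = P x0" using Px0 r0q by simp
    hence E: "b*x0*x0^q + 1 + \<delta> + \<alpha>^q*(x0^q)^2 + \<beta>^q*(x0*x0^q) = b*x0*x0^q + \<delta> + \<alpha>*x0^2 + \<beta>*(x0*x0^q)"
      unfolding P_def m by (simp add: fa power_mult_distrib ff bq d1 sqq algebra_simps)
    have "\<alpha>*x0^2 + \<alpha>^q*(x0^q)^2 + b*x0*x0^q - 1
        = (b*x0*x0^q + \<delta> + \<alpha>*x0^2 + \<beta>*(x0*x0^q)) - (b*x0*x0^q + 1 + \<delta> + \<alpha>^q*(x0^q)^2 + \<beta>^q*(x0*x0^q))
          + 2*(\<alpha>^q*(x0^q)^2 + \<beta>^q*(x0*x0^q))"
      unfolding bdef by (simp add: algebra_simps)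
    also have "\<dots> = 0" unfolding E diff_self using two by simp
    finally show "\<alpha>*x0^2 + \<alpha>^q*(x0^q)^2 + b*x0*x0^q = 1" by simp
  qed
qed



theorem lemma3p3:
  fixes q h :: nat and l :: "'a::{field,finite} vec3 set set" and \<alpha> \<beta> \<delta> v :: 'a
  assumes card: "card (UNIV :: 'a set) = q ^ 2"
    and qh: "q = 2 ^ h" and h2: "h \<ge> 2"
    and delta_notq: "\<delta> ^ q \<noteq> \<delta>"
    and delta1: "\<delta> ^ q = 1 + \<delta>"
    and delta2: "\<delta> ^ 2 = v + \<delta>"
    and vq: "v ^ q = v" and v1: "v \<noteq> 1" and trv: "abs_trace h v = 1"
    and alpha0: "\<alpha> \<noteq> 0"
    and beta_notq: "\<beta> ^ q \<noteq> \<beta>"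
    and tr0: "abs_trace h (\<alpha> ^ (q + 1) / (\<beta> ^ q + \<beta>) ^ 2) = 0"
    and line: "l \<in> plines" and Uinf: "ppt (1, 0, 0) \<in> l"
  shows "card (l \<inter> pedal (unitalAB q \<alpha> \<beta>) (ppt (0, \<delta>, 1))) \<le> 2"
proof -
  have h1: "h > 0" using h2 by simp
  have card': "card (UNIV :: 'a set) = 2^(2*h)" using card qh
    by (simp add: power_mult[symmetric] mult.commute)
  have two: "(2::'a) = 0" using char2_field[OF card'] h1 by simp
  have fa: "(x+y)^q = x^q + y^q" for x y :: 'a using frob_add[OF two] qh by simp
  have ff: "(x^q)^q = x" for x :: 'a
  proof -
    have "(x^q)^q = x ^ (q^2)" by (simp add: power_mult[symmetric] power2_eq_square)
    thus ?thesis using fermat_field[of x] card by simp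
  qed
  have q0: "q > 0" using qh by simp
  have v0: "v \<noteq> 0"
  proof
    assume "v = 0"
    hence "abs_trace h v = 0" unfolding abs_trace_def by (simp add: power_0_left)
    thus False using trv by simp
  qed
  define b where "b = \<beta> + \<beta>^q"
  have b0: "b \<noteq> 0"
  proof
    assume "b = 0"
    hence "\<beta>^q = - \<beta>" unfolding b_def by (simp add: eq_neg_iff_add_eq_0 add.commute)
    thus False using beta_notq char2_neg[OF two] by simp
  qed
  obtain a0 e c0 where L0: "(a0,e,c0) \<noteq> (0,0,0)" and l: "l = pline (a0,e,c0)"
    using plinesE[OF line] by blast
  have "a0 = 0" using Uinf mem_pline[of "(1,0,0)" "(a0,e,c0)"] unfolding l incid3_def by simp
  define S where "S = {x. \<alpha>*x^2 + \<alpha>^q*(x^q)^2 + b*x*x^q = 1 \<and> e*(b*x*x^q + \<delta>) + c0 = 0}"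
  have cS: "card S \<le> 2"
  proof (cases "e = 0")
    case True
    hence "c0 \<noteq> 0" using L0 \<open>a0 = 0\<close> by simp
    hence "S = {}" unfolding S_def using True by simp
    thus ?thesis by simp
  next
    case False
    show ?thesis unfolding S_def by (rule no_three[OF two fa alpha0 b0 False])
  qed
  have sub: "l \<inter> pedal (unitalAB q \<alpha> \<beta>) (ppt (0, \<delta>, 1)) \<subseteq> (\<lambda>x. ppt (x, b*x*x^q + \<delta>, 1)) ` S"
  proof
    fix Q assume Q: "Q \<in> l \<inter> pedal (unitalAB q \<alpha> \<beta>) (ppt (0, \<delta>, 1))"
    then obtain x0 where x0: "Q = ppt (x0, b*x0*x0^q + \<delta>, 1)" "\<alpha>*x0^2 + \<alpha>^q*(x0^q)^2 + b*x0*x0^q = 1"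
      using pedal_char[OF two fa ff q0 delta1 vq v0 v1 b_def b0] by blast
    have "Q \<in> l" using Q by simp
    hence "e*(b*x0*x0^q + \<delta>) + c0 = 0"
      using mem_pline[of "(x0, b*x0*x0^q + \<delta>, 1)" "(a0,e,c0)"] \<open>a0 = 0\<close>
      unfolding l x0(1) incid3_def by simp
    hence "x0 \<in> S" unfolding S_def using x0(2) by simp
    thus "Q \<in> (\<lambda>x. ppt (x, b*x*x^q + \<delta>, 1)) ` S" using x0(1) by blast
  qed
  have "card (l \<inter> pedal (unitalAB q \<alpha> \<beta>) (ppt (0, \<delta>, 1))) \<le> card ((\<lambda>x. ppt (x, b*x*x^q + \<delta>, 1)) ` S)"
    by (rule card_mono[OF _ sub]) simp
  also have "\<dots> \<le> card S" by (rule card_image_le) simp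
  finally show ?thesis using cS by simp
qed

end
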